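(* Let $q=p^s$ with $p$ prime, $R_T=\mathbb{F}_q[T]$, $P\in R_T$ monic irreducible of degree $d$. For $m\ge1$ and $\beta\in\mathbb{N}$ let $v_m(\beta)$ be the number of distinct cyclic subgroups of order $p^m$ of $(R_T/(P^{\beta}))^{\ast}$. Let $n\geq 2$, $\alpha\in\mathbb{N}$ and $\delta=\left[\frac{\alpha-1}{p}\right]+1$. Then \[ v_n(\alpha)=\frac{q^{d\left(\alpha-\lceil\alpha/p\rceil\right)}}{p}\,v_{n-1}(\delta). \]
   Context: $[x]$ denotes the floor and $\lceil x\rceil$ the ceiling of a real number $x$. *)

theory Defs
  imports "HOL-Computational_Algebra.Polynomial" "HOL-Computational_Algebra.Factorial_Ring"
          "HOL-Algebra.Ring" "HOL-Algebra.Generated_Groups"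
begin

text \<open>The residue ring R_T/(M) for R_T = k[T], modelled on the canonical
  representatives (polynomials reduced modulo M), with the induced operations.\<close>
definition poly_residue_ring :: "'a::field poly \<Rightarrow> 'a poly ring" where
  "poly_residue_ring M =
     \<lparr>carrier = {f. f mod M = f},
      monoid.mult = (\<lambda>f g. (f * g) mod M),
      one = 1 mod M,
      zero = 0,
      add = (\<lambda>f g. (f + g) mod M)\<rparr>"

definition poly_residue_units :: "'a::field poly \<Rightarrow> 'a poly monoid" where
  "poly_residue_units M = units_of (poly_residue_ring M)"

definition cyc_sub_count :: "'a::field poly \<Rightarrow> nat \<Rightarrow> nat \<Rightarrow> nat \<Rightarrow> nat" where
  "cyc_sub_count P p m \<beta> =
     card {H. subgroup H (poly_residue_units (P ^ \<beta>)) \<and>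
              (\<exists>g\<in>carrier (poly_residue_units (P ^ \<beta>)).
                  H = generate (poly_residue_units (P ^ \<beta>)) {g}) \<and>
              card H = p ^ m}"

end

theory Submission
  imports Defs "HOL-Algebra.Multiplicative_Group" "HOL-Number_Theory.Residues" "HOL-Computational_Algebra.Polynomial_Factorial"
begin

lemma (in group) gen_card_fin:
  assumes fin: "finite (carrier G)" and g: "g \<in> carrier G"
  shows "generate G {g} = (\<lambda>k. g [^] k) ` {0..ord g - 1}"
proof -
  have "ord g \<noteq> 0" using ord_ge_1[OF fin g] by simp
  then show ?thesis using generate_pow_nat[OF g] ord_elems_inf_carrier[OF g] by auto
qed

lemma (in group) gens_count:
  assumes fin: "finite (carrier G)" and g: "g \<in> carrier G"
  shows "card {x \<in> generate G {g}. ord x = ord g} = card {i \<in> {0..ord g - 1}. coprime i (ord g)}"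
proof -
  have "{x \<in> generate G {g}. ord x = ord g} = (\<lambda>k. g [^] k) ` {i \<in> {0..ord g - 1}. coprime i (ord g)}"
    unfolding gen_card_fin[OF fin g] using pow_ord_eq_ord_iff[OF fin g] by auto
  moreover have "inj_on (\<lambda>k. g [^] k) {i \<in> {0..ord g - 1}. coprime i (ord g)}"
    by (rule inj_on_subset[OF ord_inj[OF g]]) auto
  ultimately show ?thesis by (simp add: card_image)
qed

lemma (in group) cyc_count:
  assumes fin: "finite (carrier G)" and m: "m \<ge> 1"
  shows "card {H. subgroup H G \<and> (\<exists>g\<in>carrier G. H = generate G {g}) \<and> card H = m}
           * card {i \<in> {0..m - 1}. coprime i m} = card {g \<in> carrier G. ord g = m}"
proof -
  define C where "C = {H. subgroup H G \<and> (\<exists>g\<in>carrier G. H = generate G {g}) \<and> card H = m}"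
  have eq: "{g \<in> carrier G. ord g = m} = (\<Union>H\<in>C. {g \<in> H. ord g = m})"
  proof
    show "{g \<in> carrier G. ord g = m} \<subseteq> (\<Union>H\<in>C. {g \<in> H. ord g = m})"
    proof
      fix g assume "g \<in> {g \<in> carrier G. ord g = m}"
      hence g: "g \<in> carrier G" "ord g = m" by auto
      have "generate G {g} \<in> C" unfolding C_def
        using g generate_is_subgroup[of "{g}"] generate_pow_card[OF g(1)] by auto
      moreover have "g \<in> generate G {g}" by (rule generate.incl) simp
      ultimately show "g \<in> (\<Union>H\<in>C. {g \<in> H. ord g = m})" using g by auto
    qed
  next
    show "(\<Union>H\<in>C. {g \<in> H. ord g = m}) \<subseteq> {g \<in> carrier G. ord g = m}"
      unfolding C_def using subgroup.subset by fastforce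
  qed
  have finC: "finite C" unfolding C_def
    by (rule finite_subset[of _ "Pow (carrier G)"]) (use fin subgroup.subset in auto)
  have disj: "\<forall>H1\<in>C. \<forall>H2\<in>C. H1 \<noteq> H2 \<longrightarrow> {g \<in> H1. ord g = m} \<inter> {g \<in> H2. ord g = m} = {}"
  proof (intro ballI impI)
    fix H1 H2 assume H: "H1 \<in> C" "H2 \<in> C" "H1 \<noteq> H2"
    show "{g \<in> H1. ord g = m} \<inter> {g \<in> H2. ord g = m} = {}"
    proof (rule ccontr)
      assume "\<not> ?thesis"
      then obtain g where g: "g \<in> H1" "g \<in> H2" "ord g = m" by auto
      have same: "H = generate G {g}" if "H \<in> C" "g \<in> H" for H
      proof -
        have sH: "subgroup H G" "card H = m" using that unfolding C_def by blast+
        have gc: "g \<in> carrier G" using sH(1) subgroup.subset that(2) by blast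
        have sub: "generate G {g} \<subseteq> H" using generate_subgroup_incl[of "{g}" H] sH that by auto
        have fH: "finite H" using sH m card_ge_0_finite[of H] by simp
        have "card (generate G {g}) = card H" using generate_pow_card[OF gc] g sH by simp
        then show ?thesis using card_subset_eq[OF fH sub] by simp
      qed
      show False using same[OF H(1) g(1)] same[OF H(2) g(2)] H(3) by simp
    qed
  qed
  have each: "card {g \<in> H. ord g = m} = card {i \<in> {0..m - 1}. coprime i m}" if "H \<in> C" for H
  proof -
    have hc: "subgroup H G \<and> (\<exists>g\<in>carrier G. H = generate G {g}) \<and> card H = m"
      using that unfolding C_def by (rule CollectD)
    then have cH: "card H = m" by (rule conjunct2[THEN conjunct2])
    from hc have "\<exists>g\<in>carrier G. H = generate G {g}" by (rule conjunct2[THEN conjunct1])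
    then obtain g where g0: "g \<in> carrier G" "H = generate G {g}" by (rule bexE)
    note g = g0 cH
    have "ord g = m" using generate_pow_card[OF g(1)] g by simp
    then show ?thesis using gens_count[OF fin g(1)] g by simp
  qed
  have finH: "finite {g \<in> H. ord g = m}" if "H \<in> C" for H
    using that unfolding C_def using fin subgroup.subset by (metis (no_types, lifting) finite_subset mem_Collect_eq subsetI)
  have "card {g \<in> carrier G. ord g = m} = (\<Sum>H\<in>C. card {g \<in> H. ord g = m})"
    unfolding eq by (rule card_UN_disjoint[OF finC]) (use finH disj in auto)
  also have "\<dots> = card C * card {i \<in> {0..m - 1}. coprime i m}" using each by simp
  finally show ?thesis unfolding C_def by simp
qed

lemma frob:
  fixes x y :: "'b::comm_ring_1"
  assumes "prime (CHAR('b))"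
  shows "(x + y) ^ CHAR('b) = x ^ CHAR('b) + y ^ CHAR('b)"
proof -
  let ?c = "CHAR('b)"
  have c0: "?c > 0" using assms prime_gt_0_nat by blast
  have z: "of_nat (?c choose k) * x ^ k * y ^ (?c - k) = (0::'b)" if "k \<in> {..?c} - {0, ?c}" for k
  proof -
    have "?c dvd (?c choose k)" using that assms by (intro dvd_choose_prime) auto
    hence "of_nat (?c choose k) = (0::'b)" by (simp add: of_nat_eq_0_iff_char_dvd)
    thus ?thesis by simp
  qed
  have "(x + y) ^ ?c = (\<Sum>k\<le>?c. of_nat (?c choose k) * x ^ k * y ^ (?c - k))"
    by (rule binomial_ring)
  also have "\<dots> = (\<Sum>k\<in>{0, ?c}. of_nat (?c choose k) * x ^ k * y ^ (?c - k))"
    by (rule sum.mono_neutral_right) (use z c0 in auto)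
  also have "\<dots> = x ^ ?c + y ^ ?c" using c0 by (simp add: add.commute)
  finally show ?thesis .
qed

lemma card_polys:
  "finite {f::'a::{field,finite} poly. f = 0 \<or> degree f < m} \<and>
   card {f::'a poly. f = 0 \<or> degree f < m} = card (UNIV::'a set) ^ m"
proof (induction m)
  case 0
  have "{f::'a poly. f = 0 \<or> degree f < 0} = {0}" by auto
  then show ?case by simp
next
  case (Suc m)
  let ?S = "{f::'a poly. f = 0 \<or> degree f < m}"
  have l1: "f \<in> (\<lambda>(a, g). pCons a g) ` (UNIV \<times> ?S)" if f: "f = 0 \<or> degree f < Suc m" for f :: "'a poly"
  proof -
    obtain a g where fg: "f = pCons a g" by (cases f) auto
    have "g = 0 \<or> degree g < m"
    proof (cases "g = 0")
      case False then show ?thesis using f fg by (auto simp: degree_pCons_eq)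
    qed simp
    thus ?thesis using fg by auto
  qed
  have l2: "pCons a g = 0 \<or> degree (pCons a g) < Suc m" if "g \<in> ?S" for a g
    using that by (cases "g = 0") (auto simp: degree_pCons_eq)
  have eq: "{f::'a poly. f = 0 \<or> degree f < Suc m} = (\<lambda>(a, g). pCons a g) ` (UNIV \<times> ?S)"
  proof (intro equalityI subsetI)
    fix f assume "f \<in> {f::'a poly. f = 0 \<or> degree f < Suc m}"
    then show "f \<in> (\<lambda>(a, g). pCons a g) ` (UNIV \<times> ?S)" using l1 by simp
  next
    fix f assume "f \<in> (\<lambda>(a, g). pCons a g) ` (UNIV \<times> ?S)"
    then obtain a g where "f = pCons a g" "g \<in> ?S" by auto
    then show "f \<in> {f::'a poly. f = 0 \<or> degree f < Suc m}" using l2 by simp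
  qed
  have inj: "inj_on (\<lambda>(a, g). pCons a g) (UNIV \<times> ?S)"
    by (auto simp: inj_on_def)
  show ?case unfolding eq using Suc inj
    by (simp add: card_image card_cartesian_product)
qed

lemma car_char:
  fixes M f :: "'a::field poly"
  assumes "M \<noteq> 0"
  shows "f mod M = f \<longleftrightarrow> f = 0 \<or> degree f < degree M"
proof
  assume "f mod M = f"
  then show "f = 0 \<or> degree f < degree M" using degree_mod_less[OF assms, of f] by metis
next
  assume "f = 0 \<or> degree f < degree M"
  then show "f mod M = f" using mod_poly_less by auto
qed

lemma low_add:
  fixes f g :: "'a::field poly"
  assumes "f = 0 \<or> degree f < n" "g = 0 \<or> degree g < n"
  shows "f + g = 0 \<or> degree (f + g) < n" "f - g = 0 \<or> degree (f - g) < n"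
proof -
  have c: "(f = 0 \<and> g = 0) \<or> (degree f < n \<and> degree g < n)"
    using assms by (cases "n = 0") auto
  show "f + g = 0 \<or> degree (f + g) < n"
  proof (cases "f = 0 \<and> g = 0")
    case False
    then have h: "degree f < n" "degree g < n" using c by auto
    then show ?thesis using le_less_trans[OF degree_add_le_max[of f g]] by simp
  qed simp
  show "f - g = 0 \<or> degree (f - g) < n"
  proof (cases "f = 0 \<and> g = 0")
    case False
    then have h: "degree f < n" "degree g < n" using c by auto
    then show ?thesis using le_less_trans[OF degree_diff_le_max[of f g]] by simp
  qed simp
qed

lemma char_p:
  assumes "prime p" "card (UNIV :: 'a::{field,finite} set) = p ^ s"
  shows "CHAR('a) = p"
proof -
  have "CHAR('a) > 0" by (simp add: finite_imp_CHAR_pos)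
  hence pc: "prime (CHAR('a))" using prime_CHAR_semidom by blast
  have "CHAR('a) dvd p ^ s" using CHAR_dvd_CARD[where 'a='a] assms by simp
  hence "CHAR('a) dvd p" using pc prime_dvd_power by blast
  then show ?thesis using pc assms(1) primes_dvd_imp_eq by blast
qed

lemma factor_out:
  fixes P y :: "'a::field poly"
  assumes dP: "degree P \<ge> 1"
  shows "y \<noteq> 0 \<Longrightarrow> \<exists>e z. y = P ^ e * z \<and> \<not> P dvd z"
proof (induction "degree y" arbitrary: y rule: less_induct)
  case less
  show ?case
  proof (cases "P dvd y")
    case False then show ?thesis by (intro exI[of _ 0] exI[of _ y]) simp
  next
    case True
    then obtain y' where y': "y = P * y'" by (elim dvdE)
    have "y' \<noteq> 0" using y' less.prems by auto
    moreover have "P \<noteq> 0" using dP by auto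
    ultimately have "degree y' < degree y" using y' dP by (simp add: degree_mult_eq)
    then obtain e z where "y' = P ^ e * z" "\<not> P dvd z" using less.hyps \<open>y' \<noteq> 0\<close> by blast
    then show ?thesis using y' by (intro exI[of _ "Suc e"] exI[of _ z]) (simp add: mult.assoc)
  qed
qed

lemma dvd_pow_iff:
  fixes P y :: "'a::field poly"
  assumes P: "prime_elem P" and dP: "degree P \<ge> 1" and p: "p > 0" and a1: "\<alpha> \<le> p * \<delta>"
    and a2: "\<And>m. \<alpha> \<le> p * m \<Longrightarrow> \<delta> \<le> m"
  shows "P ^ \<alpha> dvd y ^ p \<longleftrightarrow> P ^ \<delta> dvd y"
proof (cases "y = 0")
  case True then show ?thesis using p by (simp add: zero_power)
next
  case False
  have P0: "P \<noteq> 0" using dP by auto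
  obtain e z where yz: "y = P ^ e * z" "\<not> P dvd z" using factor_out[OF dP False] by blast
  have nz: "\<not> P dvd z ^ p" using yz(2) P prime_elem_dvd_power by blast
  show ?thesis
  proof
    assume h: "P ^ \<alpha> dvd y ^ p"
    have "\<alpha> \<le> p * e"
    proof (rule ccontr)
      assume "\<not> \<alpha> \<le> p * e"
      hence "P ^ (p * e + 1) dvd P ^ \<alpha>" by (intro le_imp_power_dvd) simp
      hence "P ^ (p * e + 1) dvd y ^ p" using h dvd_trans by blast
      hence "P ^ (p * e) * P dvd P ^ (p * e) * z ^ p"
        using yz(1) by (simp add: power_mult_distrib power_mult[symmetric] mult.commute)
      hence "P dvd z ^ p" using P0 by (subst (asm) dvd_mult_cancel_left) auto
      thus False using nz by simp
    qed
    hence "\<delta> \<le> e" using a2 by blast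
    hence "P ^ \<delta> dvd P ^ e" by (rule le_imp_power_dvd)
    thus "P ^ \<delta> dvd y" using yz(1) by (simp add: dvd_mult2)
  next
    assume "P ^ \<delta> dvd y"
    then obtain c where "y = P ^ \<delta> * c" by (elim dvdE)
    hence "y ^ p = P ^ (\<delta> * p) * c ^ p" by (simp add: power_mult_distrib power_mult)
    moreover have "P ^ \<alpha> dvd P ^ (\<delta> * p)" using a1 by (intro le_imp_power_dvd) (simp add: mult.commute)
    ultimately show "P ^ \<alpha> dvd y ^ p" by simp
  qed
qed

lemma key_equiv:
  fixes P u :: "'a::field poly"
  assumes pc: "prime (CHAR('a))" and P: "prime_elem P"
    and dP: "degree P \<ge> 1" and a1: "\<alpha> \<le> CHAR('a) * \<delta>" and a2: "\<And>m. \<alpha> \<le> CHAR('a) * m \<Longrightarrow> \<delta> \<le> m"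
    and k: "k \<ge> 1"
  shows "P ^ \<alpha> dvd u ^ (CHAR('a) ^ k) - 1 \<longleftrightarrow>
         P ^ \<delta> dvd (u mod P ^ \<delta>) ^ (CHAR('a) ^ (k - 1)) - 1"
proof -
  let ?p = "CHAR('a)"
  have pc': "prime (CHAR('a poly))" using pc by simp
  have p0: "?p > 0" using pc prime_gt_0_nat by blast
  define w where "w = u mod P ^ \<delta>"
  define t where "t = u div P ^ \<delta>"
  have u: "u = w + P ^ \<delta> * t" unfolding w_def t_def by simp
  have "u ^ ?p = w ^ ?p + (P ^ \<delta> * t) ^ ?p"
    unfolding u using frob[OF pc', of w "P ^ \<delta> * t"] by simp
  moreover have "P ^ \<alpha> dvd (P ^ \<delta> * t) ^ ?p"
  proof -
    have "(P ^ \<delta> * t) ^ ?p = P ^ (\<delta> * ?p) * t ^ ?p" by (simp add: power_mult_distrib power_mult)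
    moreover have "P ^ \<alpha> dvd P ^ (\<delta> * ?p)" using a1 by (intro le_imp_power_dvd) (simp add: mult.commute)
    ultimately show ?thesis by simp
  qed
  ultimately have "u ^ ?p mod P ^ \<alpha> = w ^ ?p mod P ^ \<alpha>"
    by (simp add: mod_eq_dvd_iff)
  hence m1: "(u ^ ?p) ^ (?p ^ (k - 1)) mod P ^ \<alpha> = (w ^ ?p) ^ (?p ^ (k - 1)) mod P ^ \<alpha>"
    by (metis power_mod)
  have pk: "?p ^ k = ?p * ?p ^ (k - 1)" using k by (cases k) auto
  define z where "z = w ^ (?p ^ (k - 1))"
  have e1: "u ^ (?p ^ k) = (u ^ ?p) ^ (?p ^ (k - 1))" unfolding pk by (simp add: power_mult)
  have e2: "(w ^ ?p) ^ (?p ^ (k - 1)) = z ^ ?p" unfolding z_def by (simp add: power_mult[symmetric] mult.commute)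
  have "P ^ \<alpha> dvd u ^ (?p ^ k) - 1 \<longleftrightarrow> u ^ (?p ^ k) mod P ^ \<alpha> = 1 mod P ^ \<alpha>"
    by (simp add: mod_eq_dvd_iff)
  also have "\<dots> \<longleftrightarrow> z ^ ?p mod P ^ \<alpha> = 1 mod P ^ \<alpha>" using m1 e1 e2 by simp
  also have "\<dots> \<longleftrightarrow> P ^ \<alpha> dvd z ^ ?p - 1" by (simp add: mod_eq_dvd_iff)
  also have "z ^ ?p - 1 = (z - 1) ^ ?p"
  proof -
    have "(z + (- 1)) ^ ?p = z ^ ?p + (- 1) ^ ?p" using frob[OF pc', of z "-1"] by simp
    moreover have "(- 1 :: 'a poly) ^ ?p = - 1" using minus_power_prime_CHAR[where 'a="'a poly", OF _ pc', of 1] by simp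
    ultimately show ?thesis by simp
  qed
  also have "P ^ \<alpha> dvd (z - 1) ^ ?p \<longleftrightarrow> P ^ \<delta> dvd z - 1"
    by (rule dvd_pow_iff[OF P dP p0 a1 a2])
  finally show ?thesis unfolding z_def w_def .
qed

definition NS :: "'a::field poly \<Rightarrow> nat \<Rightarrow> nat \<Rightarrow> nat \<Rightarrow> 'a poly set" where
  "NS P p \<beta> k = {u. u mod P ^ \<beta> = u \<and> P ^ \<beta> dvd u ^ (p ^ k) - 1}"

lemma car_pow:
  fixes P f :: "'a::field poly"
  assumes "P \<noteq> 0"
  shows "f mod P ^ \<beta> = f \<longleftrightarrow> f = 0 \<or> degree f < degree P * \<beta>"
  using car_char[of "P ^ \<beta>" f] assms by (simp add: degree_power_eq mult.commute)

lemma finCar: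
  fixes P :: "'a::{field,finite} poly"
  assumes "P \<noteq> 0"
  shows "finite {f. f mod P ^ \<beta> = f}"
proof -
  have "{f. f mod P ^ \<beta> = f} = {f. f = 0 \<or> degree f < degree P * \<beta>}" using car_pow[OF assms] by blast
  then show ?thesis using card_polys[of "degree P * \<beta>", where 'a='a] by (simp only:)
qed

lemma count_step:
  fixes P :: "'a::{field,finite} poly"
  assumes pc: "prime (CHAR('a))" and P: "prime_elem P" and dP: "degree P \<ge> 1"
    and da: "\<delta> \<le> \<alpha>"
    and a1: "\<alpha> \<le> CHAR('a) * \<delta>" and a2: "\<And>m. \<alpha> \<le> CHAR('a) * m \<Longrightarrow> \<delta> \<le> m"
    and k: "k \<ge> 1"
  shows "card (NS P (CHAR('a)) \<alpha> k) =
         card (UNIV :: 'a set) ^ (degree P * (\<alpha> - \<delta>)) * card (NS P (CHAR('a)) \<delta> (k - 1))"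
proof -
  let ?p = "CHAR('a)"
  let ?D = "degree P"
  have P0: "P \<noteq> 0" using dP by auto
  define F where "F w = {u. u mod P ^ \<alpha> = u \<and> u mod P ^ \<delta> = w}" for w
  define L where "L = {t::'a poly. t = 0 \<or> degree t < ?D * (\<alpha> - \<delta>)}"
  have seteq: "NS P ?p \<alpha> k = (\<Union>w\<in>NS P ?p \<delta> (k - 1). F w)"
  proof -
    have "u \<in> NS P ?p \<alpha> k \<longleftrightarrow> (u \<in> (\<Union>w\<in>NS P ?p \<delta> (k - 1). F w))" for u
      using key_equiv[OF pc P dP a1 a2 k, of u] unfolding NS_def F_def by auto
    then show ?thesis by blast
  qed
  have Pd0: "P ^ \<delta> \<noteq> 0" using P0 by simp
  have degPd: "degree (P ^ \<delta>) = ?D * \<delta>" by (simp add: degree_power_eq P0 mult.commute)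
  have card_F: "card (F w) = card (UNIV :: 'a set) ^ (?D * (\<alpha> - \<delta>))" if w: "w mod P ^ \<delta> = w" for w
  proof -
    have wl: "w = 0 \<or> degree w < ?D * \<alpha>"
      using w car_pow[OF P0, of w \<delta>] mult_le_mono2[OF da, of ?D] by linarith
    have mid: "P ^ \<delta> * t = 0 \<or> degree (P ^ \<delta> * t) < ?D * \<alpha> \<longleftrightarrow> t \<in> L" for t
    proof (cases "t = 0")
      case False
      have "degree (P ^ \<delta> * t) = ?D * \<delta> + degree t" using False Pd0 degPd by (simp add: degree_mult_eq)
      moreover have "?D * \<alpha> = ?D * \<delta> + ?D * (\<alpha> - \<delta>)" using da by (simp add: diff_mult_distrib2)
      ultimately show ?thesis using False Pd0 unfolding L_def by auto
    qed (simp add: L_def)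
    have "F w = (\<lambda>t. w + P ^ \<delta> * t) ` L"
    proof (intro equalityI subsetI)
        fix u assume u: "u \<in> F w"
        define t where "t = u div P ^ \<delta>"
        have u1: "u mod P ^ \<alpha> = u" and u2: "u mod P ^ \<delta> = w" using u unfolding F_def by simp_all
        have ue: "u = w + P ^ \<delta> * t"
          using div_mult_mod_eq[of u "P ^ \<delta>"] u2 unfolding t_def by (simp add: mult.commute add.commute)
        have "u = 0 \<or> degree u < ?D * \<alpha>" using u1 car_pow[OF P0, of u \<alpha>] by simp
        hence "u - w = 0 \<or> degree (u - w) < ?D * \<alpha>" using low_add(2) wl by blast
        hence "t \<in> L" using mid[of t] ue by simp
        thus "u \<in> (\<lambda>t. w + P ^ \<delta> * t) ` L" using ue by blast
      next
        fix u assume "u \<in> (\<lambda>t. w + P ^ \<delta> * t) ` L"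
        then obtain t where t: "t \<in> L" "u = w + P ^ \<delta> * t" by auto
        have "u = 0 \<or> degree u < ?D * \<alpha>" using low_add(1)[OF wl] mid[of t] t by simp
        hence "u mod P ^ \<alpha> = u" using car_pow[OF P0] by blast
        moreover have "u mod P ^ \<delta> = w" using t(2) w by simp
        ultimately show "u \<in> F w" unfolding F_def by simp
    qed
    moreover have "inj_on (\<lambda>t. w + P ^ \<delta> * t) L" using Pd0 by (auto simp: inj_on_def)
    ultimately have "card (F w) = card L" by (simp add: card_image)
    then show ?thesis unfolding L_def by (rule trans[OF _ conjunct2[OF card_polys]])
  qed
  have finCa: "finite {f::'a poly. f mod P ^ \<beta> = f}" for \<beta> by (rule finCar[OF P0])
  have finNS: "finite (NS P ?p \<delta> (k - 1))"
    by (rule finite_subset[OF _ finCa[of \<delta>]]) (auto simp: NS_def)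
  have finF: "finite (F w)" for w
    by (rule finite_subset[OF _ finCa[of \<alpha>]]) (auto simp: F_def)
  have "card (NS P ?p \<alpha> k) = (\<Sum>w\<in>NS P ?p \<delta> (k - 1). card (F w))"
    unfolding seteq by (rule card_UN_disjoint[OF finNS]) (use finF in \<open>auto simp: F_def\<close>)
  also have "\<dots> = (\<Sum>w\<in>NS P ?p \<delta> (k - 1). card (UNIV :: 'a set) ^ (?D * (\<alpha> - \<delta>)))"
    by (rule sum.cong) (auto simp: NS_def intro: card_F)
  finally show ?thesis by simp
qed

lemma monoid_R: "monoid (poly_residue_ring (M :: 'a::field poly))"
  by (rule monoidI) (auto simp: poly_residue_ring_def mod_simps mult.assoc)

lemma pow_R: "x [^]\<^bsub>poly_residue_ring M\<^esub> (k::nat) = x ^ k mod (M :: 'a::field poly)"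
  by (induction k) (auto simp: poly_residue_ring_def mod_simps mult.commute)

lemma units_set:
  fixes M :: "'a::field poly"
  assumes "N > 0"
  shows "{g \<in> carrier (poly_residue_units M). g [^]\<^bsub>poly_residue_units M\<^esub> N = \<one>\<^bsub>poly_residue_units M\<^esub>}
         = {u. u mod M = u \<and> M dvd u ^ N - 1}"
proof -
  let ?R = "poly_residue_ring M"
  interpret monoid ?R by (rule monoid_R)
  have "g \<in> Units ?R \<and> g [^]\<^bsub>?R\<^esub> N = \<one>\<^bsub>?R\<^esub> \<longleftrightarrow> g mod M = g \<and> M dvd g ^ N - 1" for g
  proof
    assume h: "g \<in> Units ?R \<and> g [^]\<^bsub>?R\<^esub> N = \<one>\<^bsub>?R\<^esub>"
    hence "g mod M = g" unfolding Units_def by (simp add: poly_residue_ring_def)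
    moreover have "g ^ N mod M = 1 mod M" using h unfolding pow_R by (simp add: poly_residue_ring_def)
    ultimately show "g mod M = g \<and> M dvd g ^ N - 1" by (simp add: mod_eq_dvd_iff)
  next
    assume h: "g mod M = g \<and> M dvd g ^ N - 1"
    hence e: "g ^ N mod M = 1 mod M" by (simp add: mod_eq_dvd_iff)
    have gN: "g ^ (N - 1) * g = g ^ N" using assms by (cases N) (auto simp: mult.commute)
    have "g \<in> Units ?R" unfolding Units_def
    proof (intro CollectI conjI bexI[of _ "g ^ (N - 1) mod M"])
      show "g \<in> carrier ?R" using h by (simp add: poly_residue_ring_def)
      show "g ^ (N - 1) mod M \<in> carrier ?R" by (simp add: poly_residue_ring_def)
      show "g ^ (N - 1) mod M \<otimes>\<^bsub>?R\<^esub> g = \<one>\<^bsub>?R\<^esub>"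
        using e gN by (simp add: poly_residue_ring_def mod_simps)
      show "g \<otimes>\<^bsub>?R\<^esub> (g ^ (N - 1) mod M) = \<one>\<^bsub>?R\<^esub>"
        using e gN by (simp add: poly_residue_ring_def mod_simps mult.commute)
    qed
    moreover have "g [^]\<^bsub>?R\<^esub> N = \<one>\<^bsub>?R\<^esub>" unfolding pow_R using e by (simp add: poly_residue_ring_def)
    ultimately show "g \<in> Units ?R \<and> g [^]\<^bsub>?R\<^esub> N = \<one>\<^bsub>?R\<^esub>" by simp
  qed
  note A = this
  have B: "g \<in> Units ?R \<Longrightarrow> g [^]\<^bsub>units_of ?R\<^esub> N = g [^]\<^bsub>?R\<^esub> N" for g
    by (rule units_of_pow)
  have "{g \<in> Units ?R. g [^]\<^bsub>units_of ?R\<^esub> N = \<one>\<^bsub>?R\<^esub>} = {g. g \<in> Units ?R \<and> g [^]\<^bsub>?R\<^esub> N = \<one>\<^bsub>?R\<^esub>}"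
    using B by (intro Collect_cong) auto
  also have "\<dots> = {u. u mod M = u \<and> M dvd u ^ N - 1}" using A by simp
  finally show ?thesis
    unfolding poly_residue_units_def units_of_carrier units_of_one .
qed

lemma ord_prime_power:
  assumes "group G" "g \<in> carrier G" "prime p" "n \<ge> 1"
  shows "group.ord G g = p ^ n \<longleftrightarrow> g [^]\<^bsub>G\<^esub> (p ^ n) = \<one>\<^bsub>G\<^esub> \<and> \<not> g [^]\<^bsub>G\<^esub> (p ^ (n - 1)) = \<one>\<^bsub>G\<^esub>"
proof -
  interpret group G by fact
  have "ord g dvd p ^ n \<and> \<not> ord g dvd p ^ (n - 1) \<longleftrightarrow> ord g = p ^ n"
  proof
    assume h: "ord g dvd p ^ n \<and> \<not> ord g dvd p ^ (n - 1)"
    then obtain i where i: "i \<le> n" "ord g = p ^ i" using divides_primepow_nat[OF assms(3)] by blast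
    have "\<not> i \<le> n - 1"
    proof
      assume "i \<le> n - 1"
      hence "p ^ i dvd p ^ (n - 1)" by (rule le_imp_power_dvd)
      thus False using h i by simp
    qed
    hence "i = n" using i(1) by linarith
    then show "ord g = p ^ n" using i by simp
  next
    assume "ord g = p ^ n"
    moreover have "\<not> p ^ n dvd p ^ (n - 1)"
    proof -
      have "p ^ (n - 1) < p ^ n" using assms(3,4) prime_gt_1_nat by (intro power_strict_increasing) auto
      moreover have "p ^ (n - 1) > 0" using assms(3) prime_gt_0_nat by simp
      ultimately show ?thesis using nat_dvd_not_less by blast
    qed
    ultimately show "ord g dvd p ^ n \<and> \<not> ord g dvd p ^ (n - 1)" by simp
  qed
  then show ?thesis using pow_eq_id[OF assms(2)] by simp
qed

lemma ord_count:
  fixes P :: "'a::{field,finite} poly"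
  assumes p: "prime p" and P0: "P \<noteq> 0" and n: "n \<ge> 1"
  shows "cyc_sub_count P p n \<beta> * card {i \<in> {0..p ^ n - 1}. coprime i (p ^ n)}
         = card (NS P p \<beta> n) - card (NS P p \<beta> (n - 1))"
proof -
  let ?G = "poly_residue_units (P ^ \<beta>)"
  let ?R = "poly_residue_ring (P ^ \<beta>)"
  interpret R: monoid ?R by (rule monoid_R)
  interpret group ?G unfolding poly_residue_units_def by (rule R.units_group)
  have fin: "finite (carrier ?G)"
  proof (rule finite_subset)
    show "carrier ?G \<subseteq> {f. f mod P ^ \<beta> = f}"
      unfolding poly_residue_units_def units_of_carrier Units_def by (auto simp: poly_residue_ring_def)
    show "finite {f. f mod P ^ \<beta> = f}" by (rule finCar[OF P0])
  qed
  have p0: "p > 0" using p prime_gt_0_nat by blast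
  have m1: "p ^ n \<ge> 1" using p0 by simp
  have U: "{g \<in> carrier ?G. g [^]\<^bsub>?G\<^esub> (p ^ k) = \<one>\<^bsub>?G\<^esub>} = NS P p \<beta> k" for k
  proof -
    have "p ^ k > 0" using p0 by simp
    then show ?thesis unfolding NS_def by (rule units_set)
  qed
  have "{g \<in> carrier ?G. ord g = p ^ n} =
        {g \<in> carrier ?G. g [^]\<^bsub>?G\<^esub> (p ^ n) = \<one>\<^bsub>?G\<^esub>} - {g \<in> carrier ?G. g [^]\<^bsub>?G\<^esub> (p ^ (n - 1)) = \<one>\<^bsub>?G\<^esub>}"
    using ord_prime_power[OF is_group _ p n] by blast
  also have "\<dots> = NS P p \<beta> n - NS P p \<beta> (n - 1)"
    by (simp only: U)
  finally have e: "{g \<in> carrier ?G. ord g = p ^ n} = NS P p \<beta> n - NS P p \<beta> (n - 1)" .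
  have pn: "p ^ n = p ^ (n - 1) * p" using n by (cases n) (auto simp: mult.commute)
  have "{g \<in> carrier ?G. g [^]\<^bsub>?G\<^esub> (p ^ (n - 1)) = \<one>\<^bsub>?G\<^esub>} \<subseteq> {g \<in> carrier ?G. g [^]\<^bsub>?G\<^esub> (p ^ n) = \<one>\<^bsub>?G\<^esub>}"
  proof
    fix g assume "g \<in> {g \<in> carrier ?G. g [^]\<^bsub>?G\<^esub> (p ^ (n - 1)) = \<one>\<^bsub>?G\<^esub>}"
    hence g: "g \<in> carrier ?G" "g [^]\<^bsub>?G\<^esub> (p ^ (n - 1)) = \<one>\<^bsub>?G\<^esub>" by blast+
    have "g [^]\<^bsub>?G\<^esub> (p ^ n) = (g [^]\<^bsub>?G\<^esub> (p ^ (n - 1))) [^]\<^bsub>?G\<^esub> p"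
      unfolding pn using nat_pow_pow[OF g(1)] by simp
    also have "\<dots> = \<one>\<^bsub>?G\<^esub>" using g(2) by simp
    finally show "g \<in> {g \<in> carrier ?G. g [^]\<^bsub>?G\<^esub> (p ^ n) = \<one>\<^bsub>?G\<^esub>}" using g(1) by blast
  qed
  hence sub: "NS P p \<beta> (n - 1) \<subseteq> NS P p \<beta> n" by (simp only: U)
  have finNS: "finite (NS P p \<beta> (n - 1))"
    by (rule finite_subset[OF _ finCar[OF P0, of \<beta>]]) (auto simp: NS_def)
  have cv: "cyc_sub_count P p n \<beta> = card {H. subgroup H ?G \<and> (\<exists>g\<in>carrier ?G. H = generate ?G {g}) \<and> card H = p ^ n}"
    unfolding cyc_sub_count_def by (rule refl)
  show ?thesis
    unfolding cv cyc_count[OF fin m1] e by (rule card_Diff_subset[OF finNS sub])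
qed

lemma c_totient:
  assumes "m \<ge> 2"
  shows "card {i \<in> {0..m - 1}. coprime i m} = totient m"
proof -
  have "{i \<in> {0..m - 1}. coprime i m} = totatives m"
  proof (intro equalityI subsetI)
    fix i assume i: "i \<in> {i \<in> {0..m - 1}. coprime i m}"
    have "i \<noteq> 0"
    proof
      assume "i = 0"
      with i have "coprime 0 m" by simp
      hence "m = 1" by simp
      with assms show False by simp
    qed
    then show "i \<in> totatives m" using i assms by (auto simp: totatives_def)
  next
    fix i assume i: "i \<in> totatives m"
    have "i \<noteq> m" using i assms by (auto simp: totatives_def)
    then show "i \<in> {i \<in> {0..m - 1}. coprime i m}" using i by (auto simp: totatives_def)
  qed
  then show ?thesis by (simp add: totient_def)
qed

lemma delta_facts:
  fixes \<alpha> p :: nat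
  assumes p: "p > 1"
  defines "\<delta>' \<equiv> (\<alpha> + p - 1) div p"
  shows "nat (\<lfloor>(real \<alpha> - 1) / real p\<rfloor> + 1) = \<delta>'"
    and "nat \<lceil>real \<alpha> / real p\<rceil> = \<delta>'"
    and "\<alpha> \<le> p * \<delta>'"
    and "\<And>m. \<alpha> \<le> p * m \<Longrightarrow> \<delta>' \<le> m"
    and "\<delta>' \<le> \<alpha>"
proof -
  have dm: "\<alpha> + p - 1 = \<delta>' * p + (\<alpha> + p - 1) mod p" unfolding \<delta>'_def by simp
  have r: "(\<alpha> + p - 1) mod p < p" using p by simp
  have a1: "\<alpha> \<le> \<delta>' * p" using dm r p by linarith
  have a2: "\<delta>' * p < \<alpha> + p" using dm p by linarith
  show "\<alpha> \<le> p * \<delta>'" using a1 by (simp add: mult.commute)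
  show "\<delta>' \<le> m" if "\<alpha> \<le> p * m" for m
  proof (rule ccontr)
    assume "\<not> \<delta>' \<le> m"
    hence "m + 1 \<le> \<delta>'" by simp
    hence "(m + 1) * p \<le> \<delta>' * p" by (rule mult_right_mono) simp
    thus False using a2 that by (simp add: algebra_simps)
  qed
  show "\<delta>' \<le> \<alpha>"
  proof (cases "\<alpha> = 0")
    case True then show ?thesis using p unfolding \<delta>'_def by simp
  next
    case False
    have "\<alpha> \<le> p * \<alpha>" using p by simp
    then show ?thesis using \<open>\<And>m. \<alpha> \<le> p * m \<Longrightarrow> \<delta>' \<le> m\<close> by blast
  qed
  have rp: "real p > 0" using p by simp
  have b1: "real \<alpha> \<le> real \<delta>' * real p" using a1 by (metis of_nat_le_iff of_nat_mult)
  have b2: "real \<delta>' * real p < real \<alpha> + real p" using a2 by (metis of_nat_less_iff of_nat_mult of_nat_add)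
  have b3: "real \<delta>' * real p \<le> real \<alpha> + real p - 1"
  proof -
    have "\<delta>' * p \<le> \<alpha> + p - 1" using a2 by linarith
    hence "real (\<delta>' * p) \<le> real (\<alpha> + p - 1)" by (rule of_nat_mono)
    thus ?thesis using p by (simp add: of_nat_diff)
  qed
  have "\<lceil>real \<alpha> / real p\<rceil> = int \<delta>'"
  proof (rule ceiling_unique)
    show "real_of_int (int \<delta>') - 1 < real \<alpha> / real p"
      using b2 rp by (simp add: field_simps)
    show "real \<alpha> / real p \<le> real_of_int (int \<delta>')"
      using b1 rp by (simp add: field_simps)
  qed
  then show "nat \<lceil>real \<alpha> / real p\<rceil> = \<delta>'" by simp
  have "\<lfloor>(real \<alpha> - 1) / real p\<rfloor> = int \<delta>' - 1"
  proof (rule floor_unique)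
    show "real_of_int (int \<delta>' - 1) \<le> (real \<alpha> - 1) / real p"
      using b3 rp by (simp add: field_simps)
    show "(real \<alpha> - 1) / real p < real_of_int (int \<delta>' - 1) + 1"
      using b1 rp by (simp add: field_simps)
  qed
  then show "nat (\<lfloor>(real \<alpha> - 1) / real p\<rfloor> + 1) = \<delta>'" by simp
qed

theorem proposition5p5:
  fixes P :: "'a::{field,finite} poly"
    and p s d n \<alpha> :: nat
  assumes "prime p"
    and "card (UNIV :: 'a set) = p ^ s"
    and "lead_coeff P = 1"
    and "irreducible P"
    and "degree P = d"
    and "n \<ge> 2"
  defines "\<delta> \<equiv> nat (\<lfloor>(real \<alpha> - 1) / real p\<rfloor> + 1)"
  shows "real (cyc_sub_count P p n \<alpha>) =
           real (card (UNIV :: 'a set)) ^ (d * (\<alpha> - nat \<lceil>real \<alpha> / real p\<rceil>)) / real p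
             * real (cyc_sub_count P p (n - 1) \<delta>)"
proof -
  have p: "prime p" by fact
  have p1: "p > 1" using p prime_gt_1_nat by blast
  have chp: "CHAR('a) = p" by (rule char_p[OF assms(1,2)])
  have pc: "prime (CHAR('a))" using chp p by simp
  have Pp: "prime_elem P" using assms(4) by (rule field_poly_irreducible_imp_prime)
  have P0: "P \<noteq> 0" using assms(4) by (simp add: irreducible_def)
  have dP: "degree P \<ge> 1"
  proof (rule ccontr)
    assume "\<not> degree P \<ge> 1"
    hence "degree P = 0" by simp
    hence "is_unit P" using is_unit_iff_degree[OF P0] by simp
    thus False using assms(4) by (simp add: irreducible_def)
  qed
  define \<delta>' where "\<delta>' = (\<alpha> + p - 1) div p"
  note df = delta_facts[OF p1, of \<alpha>, folded \<delta>'_def]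
  have dd: "\<delta> = \<delta>'" unfolding \<delta>_def by (rule df(1))
  have a1: "\<alpha> \<le> CHAR('a) * \<delta>'" using df(3) chp by simp
  have a2: "\<And>m. \<alpha> \<le> CHAR('a) * m \<Longrightarrow> \<delta>' \<le> m" using df(4) chp by simp
  define Q where "Q = card (UNIV :: 'a set) ^ (d * (\<alpha> - \<delta>'))"
  define c :: "nat \<Rightarrow> nat" where "c m = card {i \<in> {0..m - 1}. coprime i m}" for m
  define N where "N \<beta> k = card (NS P p \<beta> k)" for \<beta> k
  have n1: "n - 1 \<ge> 1" using assms(6) by simp
  have n0: "n \<ge> 1" using assms(6) by simp
  have s1: "N \<alpha> n = Q * N \<delta>' (n - 1)"
    unfolding N_def Q_def chp[symmetric] assms(5)[symmetric] by (rule count_step[OF pc Pp dP df(5) a1 a2 n0])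
  have s2: "N \<alpha> (n - 1) = Q * N \<delta>' (n - 1 - 1)"
    unfolding N_def Q_def chp[symmetric] assms(5)[symmetric] by (rule count_step[OF pc Pp dP df(5) a1 a2 n1])
  have o1: "cyc_sub_count P p n \<alpha> * c (p ^ n) = N \<alpha> n - N \<alpha> (n - 1)"
    unfolding c_def N_def by (rule ord_count[OF p P0 n0])
  have o2: "cyc_sub_count P p (n - 1) \<delta>' * c (p ^ (n - 1)) = N \<delta>' (n - 1) - N \<delta>' (n - 1 - 1)"
    unfolding c_def N_def by (rule ord_count[OF p P0 n1])
  have ge: "p ^ k \<ge> 2" if "k \<ge> 1" for k
  proof -
    have "p ^ 1 \<le> p ^ k" using that p1 by (intro power_increasing) auto
    thus ?thesis using p1 by simp
  qed
  have c1: "c (p ^ n) = p * c (p ^ (n - 1))"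
  proof -
    define k where "k = n - 2"
    have nk: "n = Suc (Suc k)" unfolding k_def using assms(6) by simp
    have "c (p ^ n) = totient (p ^ n)" unfolding c_def using ge[of n] assms(6) by (intro c_totient) simp
    also have "\<dots> = p ^ Suc k * (p - 1)" unfolding nk by (rule totient_prime_power_Suc[OF p])
    also have "\<dots> = p * (p ^ k * (p - 1))" by simp
    also have "p ^ k * (p - 1) = totient (p ^ (n - 1))" unfolding nk using totient_prime_power_Suc[OF p, of k] by simp
    also have "\<dots> = c (p ^ (n - 1))" unfolding c_def using ge[OF n1] by (intro c_totient[symmetric]) simp
    finally show ?thesis .
  qed
  have cpos: "c (p ^ (n - 1)) > 0"
  proof -
    have "1 \<in> {i \<in> {0..p ^ (n - 1) - 1}. coprime i (p ^ (n - 1))}"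
      using ge[OF n1] by simp
    moreover have "finite {i \<in> {0..p ^ (n - 1) - 1}. coprime i (p ^ (n - 1))}" by simp
    ultimately show ?thesis unfolding c_def using card_gt_0_iff by blast
  qed
  have "cyc_sub_count P p n \<alpha> * p * c (p ^ (n - 1)) = Q * cyc_sub_count P p (n - 1) \<delta>' * c (p ^ (n - 1))"
  proof -
    have "cyc_sub_count P p n \<alpha> * p * c (p ^ (n - 1)) = N \<alpha> n - N \<alpha> (n - 1)"
      using o1 c1 by (simp add: mult.assoc)
    also have "\<dots> = Q * (N \<delta>' (n - 1) - N \<delta>' (n - 1 - 1))" using s1 s2 by (simp add: diff_mult_distrib2)
    also have "\<dots> = Q * cyc_sub_count P p (n - 1) \<delta>' * c (p ^ (n - 1))" using o2 by (simp add: mult.assoc)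
    finally show ?thesis .
  qed
  hence key: "cyc_sub_count P p n \<alpha> * p = Q * cyc_sub_count P p (n - 1) \<delta>'" using cpos by simp
  have "real (cyc_sub_count P p n \<alpha>) = real Q / real p * real (cyc_sub_count P p (n - 1) \<delta>')"
  proof -
    have "real (cyc_sub_count P p n \<alpha>) * real p = real Q * real (cyc_sub_count P p (n - 1) \<delta>')"
      using key by (metis of_nat_mult)
    thus ?thesis using p1 by (simp add: field_simps)
  qed
  moreover have "real Q = real (card (UNIV :: 'a set)) ^ (d * (\<alpha> - nat \<lceil>real \<alpha> / real p\<rceil>))"
    unfolding Q_def df(2) by simp
  ultimately show ?thesis unfolding dd by simp
qed

end
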